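(* Let $S$ be any set, $m\ge 1$, and $s,s'\in S^m$. Then $s$ and $s'$ are mirrored if and only if $s=s'$ or $s=\mathrm{rev}\,s'$.
   Context: $\mathcal{S}_m$ is the group of bijections of $I_m=\{1,\ldots,m\}$, with $\sigma\circ\tau$ meaning apply $\tau$ first. $\mathscr{T}_m=\{\sigma\in\mathcal{S}_m \mid \exists t\in I_m:\ \sigma(1)>\sigma(2)>\cdots>\sigma(t)=1,\ \sigma(t)<\sigma(t+1)<\cdots<\sigma(m)\}$. A sequence $s\in S^m$ is viewed as a function $s:I_m\to S$, and $\mathcal{S}_m$ acts on $S^m$ on the left by $\sigma s=s\circ\sigma^{-1}$, i.e. $\sigma(s_1,\ldots,s_m)=(s_{\sigma^{-1}(1)},\ldots,s_{\sigma^{-1}(m)})$. For $i\in I_m$, $\tau_i(j)=i+1-j$ for $j\le i$ and $\tau_i(j)=j$ for $j>i$; $\mathrm{rev}\,s:=\tau_m s$ is the reversed sequence. Two sequences $s,s'\in S^m$ are called mirrored if for every $\sigma\in\mathscr{T}_m$ there exists $\sigma'\in\mathscr{T}_m$ with $\sigma s=\sigma' s'$, and for every $\tau'\in\mathscr{T}_m$ there exists $\tau\in\mathscr{T}_m$ with $\tau' s'=\tau s$. *)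

theory Defs
  imports "HOL-Combinatorics.Permutations"
begin

text \<open>Sequences in S^m are lists of length m over the type 'a (playing the role of S);
  position i of the paper (1-based) is list index i - 1.
  Permutations of I_m = {1..m} are functions nat => nat that permute {1..m}.\<close>

definition Tm :: "nat \<Rightarrow> (nat \<Rightarrow> nat) set" where
  "Tm m = {\<sigma>. \<sigma> permutes {1..m} \<and>
     (\<exists>t\<in>{1..m}. (\<forall>i. 1 \<le> i \<and> i < t \<longrightarrow> \<sigma> i > \<sigma> (Suc i)) \<and> \<sigma> t = 1 \<and>
                  (\<forall>i. t \<le> i \<and> i < m \<longrightarrow> \<sigma> i < \<sigma> (Suc i)))}"

definition act :: "(nat \<Rightarrow> nat) \<Rightarrow> 'a list \<Rightarrow> 'a list" where
  "act \<sigma> s = map (\<lambda>i. s ! (inv \<sigma> i - 1)) [1..<Suc (length s)]"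

definition tau :: "nat \<Rightarrow> nat \<Rightarrow> nat" where
  "tau i j = (if 1 \<le> j \<and> j \<le> i then i + 1 - j else j)"

definition revseq :: "'a list \<Rightarrow> 'a list" where
  "revseq s = act (tau (length s)) s"

definition mirrored :: "'a list \<Rightarrow> 'a list \<Rightarrow> bool" where
  "mirrored s s' \<longleftrightarrow> length s = length s' \<and>
     (\<forall>\<sigma>\<in>Tm (length s). \<exists>\<sigma>'\<in>Tm (length s). act \<sigma> s = act \<sigma>' s') \<and>
     (\<forall>\<tau>'\<in>Tm (length s). \<exists>\<tau>\<in>Tm (length s). act \<tau>' s' = act \<tau> s)"

end

theory Submission
  imports Defs
begin
inductive peel :: "'a list \<Rightarrow> 'a list \<Rightarrow> bool" where
  pnil: "peel [] []"
| pl: "peel s w \<Longrightarrow> peel (x # s) (x # w)"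
| pr: "peel s w \<Longrightarrow> peel (s @ [x]) (x # w)"

lemma peel_len: "peel s w \<Longrightarrow> length w = length s"
  by (induction rule: peel.induct) auto

lemma peel_set: "peel s w \<Longrightarrow> set w = set s"
  by (induction rule: peel.induct) auto

lemma peel_refl: "peel s s"
  by (induction s) (auto intro: peel.intros)

lemma peel_rev: "peel s w \<Longrightarrow> peel (rev s) w"
  by (induction rule: peel.induct) (auto intro: peel.intros)

lemma peel_rev_iff: "peel (rev s) w \<longleftrightarrow> peel s w"
  using peel_rev[of "rev s" w] peel_rev[of s w] by auto

lemma peel_self_rev: "peel s (rev s)"
  using peel_rev[OF peel_refl[of "rev s"]] by simp

lemma peel_Cons: "peel L (y # w) \<longleftrightarrow>
   (L \<noteq> [] \<and> hd L = y \<and> peel (tl L) w) \<or> (L \<noteq> [] \<and> last L = y \<and> peel (butlast L) w)"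
proof
  assume "peel L (y # w)"
  then show "(L \<noteq> [] \<and> hd L = y \<and> peel (tl L) w) \<or> (L \<noteq> [] \<and> last L = y \<and> peel (butlast L) w)"
    by (cases rule: peel.cases) auto
next
  assume "(L \<noteq> [] \<and> hd L = y \<and> peel (tl L) w) \<or> (L \<noteq> [] \<and> last L = y \<and> peel (butlast L) w)"
  then show "peel L (y # w)"
  proof
    assume h: "L \<noteq> [] \<and> hd L = y \<and> peel (tl L) w"
    then have "L = y # tl L" by (cases L) auto
    then show ?thesis using h pl by metis
  next
    assume h: "L \<noteq> [] \<and> last L = y \<and> peel (butlast L) w"
    then have "L = butlast L @ [y]" by (metis append_butlast_last_id)
    then show ?thesis using h pr by metis
  qed
qed

lemma peel_Nil_iff: "peel L [] \<longleftrightarrow> L = []"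
  using peel_len[of L "[]"] by (auto intro: pnil)

lemma peel_const: "peel (replicate n x) w \<longleftrightarrow> w = replicate n x"
proof
  assume h: "peel (replicate n x) w"
  then have "length w = n" "set w \<subseteq> {x}" using peel_len peel_set by fastforce+
  then have "\<forall>y\<in>set w. y = x" by auto
  then show "w = replicate n x" using replicate_length_same[of w x] \<open>length w = n\<close> by simp
qed (simp add: peel_refl)


lemma hd_run: "u \<noteq> [] \<Longrightarrow> hd (replicate a x @ u @ replicate b x) = (if a = 0 then hd u else x)"
  by (cases a) auto
lemma last_run: "u \<noteq> [] \<Longrightarrow> last (replicate a x @ u @ replicate b x) = (if b = 0 then last u else x)"
  by (cases b) (auto simp: replicate_append_same[symmetric])
lemma tl_run: "0 < a \<Longrightarrow> tl (replicate a x @ u @ replicate b x) = replicate (a-1) x @ u @ replicate b x"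
  by (cases a) auto
lemma butlast_run: "u \<noteq> [] \<Longrightarrow> 0 < b \<Longrightarrow> butlast (replicate a x @ u @ replicate b x) = replicate a x @ u @ replicate (b-1) x"
  by (cases b) (auto simp: replicate_append_same[symmetric] butlast_append)

lemma runs:
  assumes u: "u \<noteq> []" and hu: "hd u \<noteq> x" and lu: "last u \<noteq> x"
  shows "k \<le> a + b \<Longrightarrow> peel (replicate a x @ u @ replicate b x) (replicate k x @ w) \<longleftrightarrow>
    (\<exists>i j. i + j = k \<and> i \<le> a \<and> j \<le> b \<and> peel (replicate (a-i) x @ u @ replicate (b-j) x) w)"
proof (induction k arbitrary: a b)
  case 0
  then show ?case by auto
next
  case (Suc k)
  note ih = Suc.IH and pr = Suc.prems
  let ?L = "replicate a x @ u @ replicate b x"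
  have ne: "?L \<noteq> []" using u by simp
  have "peel ?L (replicate (Suc k) x @ w) \<longleftrightarrow>
     (0 < a \<and> peel (replicate (a-1) x @ u @ replicate b x) (replicate k x @ w)) \<or>
     (0 < b \<and> peel (replicate a x @ u @ replicate (b-1) x) (replicate k x @ w))"
    using peel_Cons[of ?L x "replicate k x @ w"] ne hd_run[OF u, of a x b] last_run[OF u, of a x b]
      tl_run[of a x u b] butlast_run[OF u, of b a x] hu lu by auto
  also have "\<dots> \<longleftrightarrow> (\<exists>i j. i + j = Suc k \<and> i \<le> a \<and> j \<le> b \<and> peel (replicate (a-i) x @ u @ replicate (b-j) x) w)"
  proof
    assume "(0 < a \<and> peel (replicate (a-1) x @ u @ replicate b x) (replicate k x @ w)) \<or>
     (0 < b \<and> peel (replicate a x @ u @ replicate (b-1) x) (replicate k x @ w))"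
    then show "\<exists>i j. i + j = Suc k \<and> i \<le> a \<and> j \<le> b \<and> peel (replicate (a-i) x @ u @ replicate (b-j) x) w"
    proof
      assume h: "0 < a \<and> peel (replicate (a-1) x @ u @ replicate b x) (replicate k x @ w)"
      then obtain i j where "i + j = k" "i \<le> a - 1" "j \<le> b" "peel (replicate (a-1-i) x @ u @ replicate (b-j) x) w"
      proof -
        have "k \<le> (a - 1) + b" using pr h by linarith
        then show ?thesis using ih[of "a-1" b] h that by blast
      qed
      then show ?thesis using h by (intro exI[of _ "Suc i"] exI[of _ j]) auto
    next
      assume h: "0 < b \<and> peel (replicate a x @ u @ replicate (b-1) x) (replicate k x @ w)"
      then obtain i j where "i + j = k" "i \<le> a" "j \<le> b - 1" "peel (replicate (a-i) x @ u @ replicate (b-1-j) x) w"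
      proof -
        have "k \<le> a + (b - 1)" using pr h by linarith
        then show ?thesis using ih[of a "b-1"] h that by blast
      qed
      then show ?thesis using h by (intro exI[of _ i] exI[of _ "Suc j"]) auto
    qed
  next
    assume "\<exists>i j. i + j = Suc k \<and> i \<le> a \<and> j \<le> b \<and> peel (replicate (a-i) x @ u @ replicate (b-j) x) w"
    then obtain i j where ij: "i + j = Suc k" "i \<le> a" "j \<le> b" "peel (replicate (a-i) x @ u @ replicate (b-j) x) w"
      by blast
    show "(0 < a \<and> peel (replicate (a-1) x @ u @ replicate b x) (replicate k x @ w)) \<or>
     (0 < b \<and> peel (replicate a x @ u @ replicate (b-1) x) (replicate k x @ w))"
    proof (cases i)
      case 0
      then obtain j' where j': "j = Suc j'" using ij by (cases j) auto
      have "k \<le> a + (b-1)" using pr ij 0 j' by linarith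
      moreover have "\<exists>i j. i + j = k \<and> i \<le> a \<and> j \<le> b-1 \<and> peel (replicate (a-i) x @ u @ replicate (b-1-j) x) w"
        using ij 0 j' by (intro exI[of _ 0] exI[of _ j']) auto
      ultimately have "peel (replicate a x @ u @ replicate (b-1) x) (replicate k x @ w)"
        using ih[of a "b-1"] by blast
      then show ?thesis using ij j' by auto
    next
      case (Suc i')
      have "k \<le> (a-1) + b" using pr ij Suc by linarith
      moreover have "\<exists>i j. i + j = k \<and> i \<le> a-1 \<and> j \<le> b \<and> peel (replicate (a-1-i) x @ u @ replicate (b-j) x) w"
        using ij Suc by (intro exI[of _ i'] exI[of _ j]) auto
      ultimately have "peel (replicate (a-1) x @ u @ replicate b x) (replicate k x @ w)"
        using ih[of "a-1" b] by blast
      then show ?thesis using ij Suc by auto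
    qed
  qed
  finally show ?case .
qed


context
  fixes u :: "'a list" and x :: 'a
  assumes u: "u \<noteq> []" and hu: "hd u \<noteq> x" and lu: "last u \<noteq> x"
begin

lemma runs_full: "peel (replicate a x @ u @ replicate b x) (replicate (a+b) x @ w) \<longleftrightarrow> peel u w"
proof -
  have "peel (replicate a x @ u @ replicate b x) (replicate (a+b) x @ w) \<longleftrightarrow>
    (\<exists>i j. i + j = a+b \<and> i \<le> a \<and> j \<le> b \<and> peel (replicate (a-i) x @ u @ replicate (b-j) x) w)"
    using runs[OF u hu lu] by blast
  also have "\<dots> \<longleftrightarrow> peel u w"
  proof
    assume "\<exists>i j. i + j = a+b \<and> i \<le> a \<and> j \<le> b \<and> peel (replicate (a-i) x @ u @ replicate (b-j) x) w"
    then obtain i j where "i + j = a+b" "i \<le> a" "j \<le> b" "peel (replicate (a-i) x @ u @ replicate (b-j) x) w" by blast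
    moreover have "i = a" "j = b" using \<open>i + j = a+b\<close> \<open>i \<le> a\<close> \<open>j \<le> b\<close> by linarith+
    ultimately show "peel u w" by simp
  next
    assume "peel u w" then show "\<exists>i j. i + j = a+b \<and> i \<le> a \<and> j \<le> b \<and> peel (replicate (a-i) x @ u @ replicate (b-j) x) w"
      by (intro exI[of _ a] exI[of _ b]) auto
  qed
  finally show ?thesis .
qed

lemma runs_over: "\<not> peel (replicate a x @ u @ replicate b x) (replicate (a+b) x @ x # w)"
  using runs_full peel_Cons[of u x w] hu lu by blast

lemma runs_over2: "a + b < k \<Longrightarrow> \<not> peel (replicate a x @ u @ replicate b x) (replicate k x @ w)"
proof
  assume "a + b < k" "peel (replicate a x @ u @ replicate b x) (replicate k x @ w)"
  moreover have "replicate k x @ w = replicate (a+b) x @ x # (replicate (k - a - b - 1) x @ w)"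
  proof -
    have "k = (a+b) + Suc (k-a-b-1)" using \<open>a + b < k\<close> by arith
    then have "replicate k x = replicate (a+b) x @ replicate (Suc (k-a-b-1)) x"
      by (metis replicate_add)
    then show ?thesis by simp
  qed
  ultimately show False using runs_over by metis
qed

lemma runs_min_lower:
  assumes y: "y \<noteq> x" and p: "peel (replicate a x @ u @ replicate b x) (replicate k x @ y # w)"
  shows "min a b \<le> k"
proof (cases "k \<le> a + b")
  case True
  then obtain i j where ij: "i + j = k" "i \<le> a" "j \<le> b" "peel (replicate (a-i) x @ u @ replicate (b-j) x) (y # w)"
    using runs[OF u hu lu True] p by blast
  then have "hd (replicate (a-i) x @ u @ replicate (b-j) x) = y \<or> last (replicate (a-i) x @ u @ replicate (b-j) x) = y"
    using peel_Cons by metis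
  then have "a - i = 0 \<or> b - j = 0" using hd_run[OF u] last_run[OF u] y by metis
  then show ?thesis using ij by linarith
qed simp

lemma runs_min_exists: "\<exists>y w. y \<noteq> x \<and> peel (replicate a x @ u @ replicate b x) (replicate (min a b) x @ y # w)"
proof (cases "a \<le> b")
  case True
  have "replicate a x @ u @ replicate b x = replicate (min a b) x @ hd u # (tl u @ replicate b x)"
    using True u by simp
  then show ?thesis using peel_refl hu by metis
next
  case False
  have "rev (replicate a x @ u @ replicate b x) = replicate (min a b) x @ last u # (rev (butlast u) @ replicate a x)"
  proof -
    have "u = butlast u @ [last u]" using u by simp
    then have "rev u = rev (butlast u @ [last u])" by (rule arg_cong)
    then have "rev u = last u # rev (butlast u)" by simp
    then show ?thesis using False by (simp add: min_def)
  qed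
  then show ?thesis using peel_self_rev lu by metis
qed

lemma res_left:
  assumes ab: "a < b" and y: "y \<noteq> x"
  shows "peel (replicate a x @ u @ replicate b x) (replicate a x @ y # w) \<longleftrightarrow> y = hd u \<and> peel (tl u @ replicate b x) w"
proof -
  have "peel (replicate a x @ u @ replicate b x) (replicate a x @ y # w) \<longleftrightarrow>
    (\<exists>i j. i + j = a \<and> i \<le> a \<and> j \<le> b \<and> peel (replicate (a-i) x @ u @ replicate (b-j) x) (y # w))"
    using runs[OF u hu lu] by simp
  also have "\<dots> \<longleftrightarrow> peel (u @ replicate b x) (y # w)"
  proof
    assume "\<exists>i j. i + j = a \<and> i \<le> a \<and> j \<le> b \<and> peel (replicate (a-i) x @ u @ replicate (b-j) x) (y # w)"
    then obtain i j where ij: "i + j = a" "i \<le> a" "j \<le> b" "peel (replicate (a-i) x @ u @ replicate (b-j) x) (y # w)" by blast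
    then have "hd (replicate (a-i) x @ u @ replicate (b-j) x) = y \<or> last (replicate (a-i) x @ u @ replicate (b-j) x) = y"
      using peel_Cons by metis
    moreover have "b - j \<noteq> 0" using ij ab by linarith
    ultimately have "a - i = 0" using hd_run[OF u] last_run[OF u] y by metis
    then have "i = a" "j = 0" using ij by auto
    then show "peel (u @ replicate b x) (y # w)" using ij by simp
  next
    assume "peel (u @ replicate b x) (y # w)"
    then show "\<exists>i j. i + j = a \<and> i \<le> a \<and> j \<le> b \<and> peel (replicate (a-i) x @ u @ replicate (b-j) x) (y # w)"
      by (intro exI[of _ a] exI[of _ 0]) auto
  qed
  also have "\<dots> \<longleftrightarrow> y = hd u \<and> peel (tl u @ replicate b x) w"
    using peel_Cons[of "u @ replicate b x" y w] u ab y
    by (auto simp: last_append) 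
  finally show ?thesis .
qed

lemma res_right:
  assumes ab: "a < b" and y: "y \<noteq> x"
  shows "peel (replicate b x @ u @ replicate a x) (replicate a x @ y # w) \<longleftrightarrow> y = last u \<and> peel (replicate b x @ butlast u) w"
proof -
  have "peel (replicate b x @ u @ replicate a x) (replicate a x @ y # w) \<longleftrightarrow>
    (\<exists>i j. i + j = a \<and> i \<le> b \<and> j \<le> a \<and> peel (replicate (b-i) x @ u @ replicate (a-j) x) (y # w))"
    using runs[OF u hu lu] ab by simp
  also have "\<dots> \<longleftrightarrow> peel (replicate b x @ u) (y # w)"
  proof
    assume "\<exists>i j. i + j = a \<and> i \<le> b \<and> j \<le> a \<and> peel (replicate (b-i) x @ u @ replicate (a-j) x) (y # w)"
    then obtain i j where ij: "i + j = a" "i \<le> b" "j \<le> a" "peel (replicate (b-i) x @ u @ replicate (a-j) x) (y # w)" by blast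
    then have "hd (replicate (b-i) x @ u @ replicate (a-j) x) = y \<or> last (replicate (b-i) x @ u @ replicate (a-j) x) = y"
      using peel_Cons by metis
    moreover have "b - i \<noteq> 0" using ij ab by linarith
    ultimately have "a - j = 0" using hd_run[OF u] last_run[OF u] y by metis
    then have "j = a" "i = 0" using ij by auto
    then show "peel (replicate b x @ u) (y # w)" using ij by simp
  next
    assume "peel (replicate b x @ u) (y # w)"
    then show "\<exists>i j. i + j = a \<and> i \<le> b \<and> j \<le> a \<and> peel (replicate (b-i) x @ u @ replicate (a-j) x) (y # w)"
      using ab by (intro exI[of _ 0] exI[of _ a]) auto
  qed
  also have "\<dots> \<longleftrightarrow> y = last u \<and> peel (replicate b x @ butlast u) w"
    using peel_Cons[of "replicate b x @ u" y w] u ab y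
    by (auto simp: butlast_append) 
  finally show ?thesis .
qed

end


lemma pal:
  assumes xy: "x \<noteq> y" and b: "0 < b"
  shows "y # Z = Z' @ [y] \<Longrightarrow> Z @ replicate b x = replicate b x @ Z' \<Longrightarrow> rev (y # Z) = y # Z"
proof (induction Z arbitrary: Z' rule: length_induct)
  case (1 Z)
  note e1 = "1.prems"(1) and e2 = "1.prems"(2)
  show ?case
  proof (cases "length Z < b")
    case True
    have "take (length Z) (Z @ replicate b x) = take (length Z) (replicate b x @ Z')" using e2 by simp
    then have "Z = replicate (length Z) x" using True by simp
    moreover have "Z = []"
    proof (rule ccontr)
      assume "Z \<noteq> []"
      then have "last (y # Z) = x" using \<open>Z = replicate (length Z) x\<close>
        by (metis last_ConsR last_replicate length_0_conv)
      then show False using e1 xy by simp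
    qed
    ultimately show ?thesis by simp
  next
    case False
    have "take b (Z @ replicate b x) = take b (replicate b x @ Z')" using e2 by simp
    then have tb: "take b Z = replicate b x" using False by simp
    define Z1 where "Z1 = drop b Z"
    have Z: "Z = replicate b x @ Z1" using tb unfolding Z1_def by (metis append_take_drop_id)
    have Z': "Z' = Z1 @ replicate b x" using e2 unfolding Z by simp
    have e3: "y # replicate b x @ Z1 = Z1 @ replicate b x @ [y]" using e1 Z Z' by simp
    show ?thesis
    proof (cases "Z1 = []")
      case True
      then have "y # replicate b x = replicate b x @ [y]" using e3 by simp
      then have "hd (y # replicate b x) = hd (replicate b x @ [y])" by simp
      then show ?thesis using b xy by (cases b) auto
    next
      case False
      have "hd (y # replicate b x @ Z1) = hd (Z1 @ replicate b x @ [y])" using e3 by simp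
      then have h1: "hd Z1 = y" using False by simp
      have "last (y # replicate b x @ Z1) = last (Z1 @ replicate b x @ [y])" using e3 by simp
      then have h2: "last Z1 = y" using False by simp
      define Z2 where "Z2 = tl Z1"
      define Z2' where "Z2' = butlast Z1"
      have a1: "Z1 = y # Z2" using h1 False unfolding Z2_def by (cases Z1) auto
      have a2: "Z1 = Z2' @ [y]" using h2 False unfolding Z2'_def by (metis append_butlast_last_id)
      have "replicate b x @ y # Z2 = Z2 @ replicate b x @ [y]" using e3 a1 by simp
      also have "replicate b x @ y # Z2 = replicate b x @ Z2' @ [y]" using a1 a2 by simp
      finally have "Z2 @ replicate b x = replicate b x @ Z2'" by simp
      moreover have "length Z2 < length Z" using a1 Z by simp
      ultimately have "rev Z1 = Z1" using "1.IH" a1 a2 by metis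
      then show ?thesis using e1 Z' e3 by simp
    qed
  qed
qed

lemma decomp:
  assumes ne: "s \<noteq> []" and nc: "\<not> (\<forall>c\<in>set s. c = hd s)"
  shows "\<exists>a b u. 0 < a \<and> s = replicate a (hd s) @ u @ replicate b (hd s) \<and> u \<noteq> [] \<and> hd u \<noteq> hd s \<and> last u \<noteq> hd s"
proof -
  define x where "x = hd s"
  define a where "a = length (takeWhile (\<lambda>c. c = x) s)"
  define r where "r = dropWhile (\<lambda>c. c = x) s"
  have tw: "takeWhile (\<lambda>c. c = x) s = replicate a x"
    unfolding a_def by (metis (mono_tags) replicate_length_same set_takeWhileD)
  have s1: "s = replicate a x @ r" using tw unfolding r_def by (metis takeWhile_dropWhile_id)
  have rne: "r \<noteq> []"
  proof
    assume "r = []"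
    then have "\<forall>c\<in>set s. c = x" unfolding r_def by (simp add: dropWhile_eq_Nil_conv)
    then show False using nc x_def by simp
  qed
  have hr: "hd r \<noteq> x" using rne hd_dropWhile[of "\<lambda>c. c = x" s] unfolding r_def by simp
  have a0: "0 < a" using ne unfolding a_def x_def by (cases s) auto
  define b where "b = length (takeWhile (\<lambda>c. c = x) (rev r))"
  define r2 where "r2 = dropWhile (\<lambda>c. c = x) (rev r)"
  have tw2: "takeWhile (\<lambda>c. c = x) (rev r) = replicate b x"
    unfolding b_def by (metis (mono_tags) replicate_length_same set_takeWhileD)
  have s2: "rev r = replicate b x @ r2" using tw2 unfolding r2_def by (metis takeWhile_dropWhile_id)
  have r2ne: "r2 \<noteq> []"
  proof
    assume "r2 = []"
    then have "\<forall>c\<in>set (rev r). c = x" unfolding r2_def by (simp add: dropWhile_eq_Nil_conv)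
    moreover have "hd r \<in> set (rev r)" using rne by simp
    ultimately show False using hr by blast
  qed
  have hr2: "hd r2 \<noteq> x" using r2ne hd_dropWhile[of "\<lambda>c. c = x" "rev r"] unfolding r2_def by simp
  define u where "u = rev r2"
  have r: "r = u @ replicate b x" using s2 unfolding u_def by (metis rev_append rev_replicate rev_rev_ident)
  have une: "u \<noteq> []" using r2ne u_def by simp
  have lu: "last u \<noteq> x" using hr2 r2ne unfolding u_def by (simp add: last_rev)
  have hu: "hd u \<noteq> x" using hr r une by simp
  show ?thesis using a0 s1 r une hu lu x_def by auto
qed


lemma core_iv:
  fixes x :: 'a and u :: "'a list"
  assumes IH: "\<And>t t'. length (t :: 'a list) < length (replicate a x @ u @ replicate b x) \<Longrightarrow> (\<forall>w. peel t w \<longleftrightarrow> peel t' w) \<Longrightarrow> t' = t \<or> t' = rev t"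
    and u: "u \<noteq> []" and hu: "hd u \<noteq> x" and lu: "last u \<noteq> x" and ab: "a < b"
    and P: "\<forall>w. peel (replicate a x @ u @ replicate b x) w \<longleftrightarrow> peel (replicate b x @ u @ replicate a x) w"
  shows "rev u = u"
proof -
  have E: "peel (tl u @ replicate b x) w \<longleftrightarrow> hd u = last u \<and> peel (replicate b x @ butlast u) w" for w
    using res_left[OF u hu lu ab hu, of w] res_right[OF u hu lu ab hu, of w] P by metis
  then have hl: "hd u = last u" using peel_refl by metis
  have "\<forall>w. peel (tl u @ replicate b x) w \<longleftrightarrow> peel (replicate b x @ butlast u) w" using E hl by blast
  moreover have "length (tl u @ replicate b x) < length (replicate a x @ u @ replicate b x)" using u by (cases u) auto
  ultimately have "replicate b x @ butlast u = tl u @ replicate b x \<or> replicate b x @ butlast u = rev (tl u @ replicate b x)"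
    using IH[of "tl u @ replicate b x" "replicate b x @ butlast u"] by blast
  then show ?thesis
  proof
    assume h: "replicate b x @ butlast u = tl u @ replicate b x"
    have "hd u # tl u = butlast u @ [hd u]" using u hl by (metis append_butlast_last_id list.collapse)
    then show ?thesis using pal[of x "hd u" b "tl u" "butlast u"] h hu ab u by auto
  next
    assume "replicate b x @ butlast u = rev (tl u @ replicate b x)"
    then have "butlast u = rev (tl u)" by simp
    then have "rev u = butlast u @ [last u]" using u hl by (metis hd_Cons_tl rev.simps(2))
    then show ?thesis using u by simp
  qed
qed

lemma core: "(\<forall>w. peel s w \<longleftrightarrow> peel s' w) \<Longrightarrow> s' = s \<or> s' = rev s"
proof (induction s arbitrary: s' rule: length_induct)
  case (1 s)
  note P = "1.prems"
  have IH: "t' = t \<or> t' = rev t" if "length t < length s" "\<forall>w. peel t w \<longleftrightarrow> peel t' w" for t t' :: "'a list"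
    using "1.IH"[rule_format, OF that(1) that(2)[rule_format]] .
  show ?case
  proof (cases "s = []")
    case True
    then show ?thesis using P peel_Nil_iff pnil by metis
  next
    case ne: False
    define x where "x = hd s"
    show ?thesis
    proof (cases "\<forall>c\<in>set s. c = x")
      case True
      then have "s = replicate (length s) x" by (simp add: replicate_length_same)
      then show ?thesis using P peel_refl peel_const by metis
    next
      case nc: False
      have claim: "s'' = s \<or> s'' = rev s" if h: "hd s'' = x" and P2: "\<forall>w. peel s w \<longleftrightarrow> peel s'' w" for s''
      proof -
        obtain a b u where ab: "0 < a" "s = replicate a x @ u @ replicate b x" "u \<noteq> []" "hd u \<noteq> x" "last u \<noteq> x"
          using decomp[OF ne] nc x_def by metis
        have ne2: "s'' \<noteq> []" using P2 ne peel_Nil_iff by metis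
        have nc2: "\<not> (\<forall>c\<in>set s''. c = x)"
        proof
          assume "\<forall>c\<in>set s''. c = x"
          then have "s'' = replicate (length s'') x" by (simp add: replicate_length_same)
          then have "s = replicate (length s'') x" using P2 peel_refl peel_const by metis
          then show False using nc by simp
        qed
        obtain a' b' v where ab': "0 < a'" "s'' = replicate a' x @ v @ replicate b' x" "v \<noteq> []" "hd v \<noteq> x" "last v \<noteq> x"
          using decomp[OF ne2] nc2 h by metis
        note R = runs_full[OF ab(3-5)] runs_full[OF ab'(3-5)] runs_over2[OF ab(3-5)] runs_over2[OF ab'(3-5)]
        have "peel s (replicate (a+b) x @ u)" using R(1) peel_refl ab(2) by metis
        then have "peel s'' (replicate (a+b) x @ u)" using P2 by blast
        then have s1: "a + b \<le> a' + b'" using R(4) ab'(2) by (metis not_le)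
        have "peel s'' (replicate (a'+b') x @ v)" using R(2) peel_refl ab'(2) by metis
        then have "peel s (replicate (a'+b') x @ v)" using P2 by blast
        then have s2: "a' + b' \<le> a + b" using R(3) ab(2) by (metis not_le)
        have "\<forall>w. peel u w \<longleftrightarrow> peel v w"
          using R(1,2) P2 ab(2) ab'(2) s1 s2 by (metis le_antisym)
        moreover have "length u < length s" using ab by simp
        ultimately have uv: "v = u \<or> v = rev u" using IH by blast
        obtain y w where "y \<noteq> x" "peel s (replicate (min a b) x @ y # w)"
          using runs_min_exists[OF ab(3-5)] ab(2) by metis
        then have m1: "min a' b' \<le> min a b" using runs_min_lower[OF ab'(3-5)] ab'(2) P2 by metis
        obtain y w where "y \<noteq> x" "peel s'' (replicate (min a' b') x @ y # w)"
          using runs_min_exists[OF ab'(3-5)] ab'(2) by metis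
        then have m2: "min a b \<le> min a' b'" using runs_min_lower[OF ab(3-5)] ab(2) P2 by metis
        have cs: "(a' = a \<and> b' = b) \<or> (a' = b \<and> b' = a)" using s1 s2 m1 m2 by linarith
        have revs: "rev s = replicate b x @ rev u @ replicate a x" using ab(2) by simp
        have iv: "rev u = u" if "a \<noteq> b" and P3: "\<forall>w. peel s w \<longleftrightarrow> peel (replicate b x @ u @ replicate a x) w"
        proof -
          have P4: "\<forall>w. peel (replicate a x @ u @ replicate b x) w \<longleftrightarrow> peel (replicate b x @ u @ replicate a x) w"
            using P3 ab(2) by simp
          show ?thesis
          proof (cases "a < b")
            case True
            have IH1: "t' = t \<or> t' = rev t" if "length t < length (replicate a x @ u @ replicate b x)" "\<forall>w. peel t w \<longleftrightarrow> peel t' w" for t t' :: "'a list"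
              by (rule IH[OF _ that(2)]) (use that(1) ab(2) in simp)
            show ?thesis by (rule core_iv[OF IH1 ab(3-5) True P4])
          next
            case False
            then have ba: "b < a" using \<open>a \<noteq> b\<close> by simp
            have IH2: "t' = t \<or> t' = rev t" if "length t < length (replicate b x @ u @ replicate a x)" "\<forall>w. peel t w \<longleftrightarrow> peel t' w" for t t' :: "'a list"
              by (rule IH[OF _ that(2)]) (use that(1) ab(2) in simp)
            have P5: "\<forall>w. peel (replicate b x @ u @ replicate a x) w \<longleftrightarrow> peel (replicate a x @ u @ replicate b x) w"
              using P4 by blast
            show ?thesis by (rule core_iv[OF IH2 ab(3-5) ba P5])
          qed
        qed
        show ?thesis
        proof (cases "a = b")
          case True
          then show ?thesis using uv cs ab(2) ab'(2) revs by auto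
        next
          case False
          from uv show ?thesis
          proof
            assume vu: "v = u"
            show ?thesis
            proof (cases "a' = a")
              case True then show ?thesis using cs vu ab(2) ab'(2) by auto
            next
              case False
              then have "a' = b" "b' = a" using cs by auto
              then have "rev u = u" using iv[OF \<open>a \<noteq> b\<close>] P2 ab'(2) vu by metis
              then show ?thesis using revs ab'(2) \<open>a' = b\<close> \<open>b' = a\<close> vu by auto
            qed
          next
            assume vu: "v = rev u"
            show ?thesis
            proof (cases "a' = b")
              case True then show ?thesis using cs vu ab'(2) revs by auto
            next
              case False
              then have "a' = a" "b' = b" using cs by auto
              have "rev s'' = replicate b x @ u @ replicate a x" using ab'(2) vu \<open>a' = a\<close> \<open>b' = b\<close> by simp
              then have "rev u = u" using iv[OF \<open>a \<noteq> b\<close>] P2 peel_rev_iff by metis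
              then show ?thesis using ab(2) ab'(2) \<open>a' = a\<close> \<open>b' = b\<close> vu by auto
            qed
          qed
        qed
      qed
      have "peel s' s" using P peel_refl by blast
      moreover have "s = x # tl s" using ne x_def by simp
      ultimately have "hd s' = x \<or> last s' = x" using peel_Cons by metis
      then show ?thesis
      proof
        assume "hd s' = x" then show ?thesis using claim P by blast
      next
        assume l: "last s' = x"
        have "s' \<noteq> []" using P ne peel_Nil_iff by metis
        then have "hd (rev s') = x" using l by (simp add: hd_rev)
        moreover have "\<forall>w. peel s w \<longleftrightarrow> peel (rev s') w" using P peel_rev_iff by blast
        ultimately have "rev s' = s \<or> rev s' = rev s" using claim by blast
        then show ?thesis by auto
      qed
    qed
  qed
qed

lemma perm_intro:
  assumes "finite S" "f ` S \<subseteq> S" "inj_on f S" "\<And>x. x \<notin> S \<Longrightarrow> f x = x"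
  shows "f permutes S"
proof -
  have "f ` S = S" using endo_inj_surj assms(1-3) by blast
  then have "bij_betw f S S" using assms(3) by (simp add: bij_betw_def)
  then show ?thesis using assms(4) by (rule bij_imp_permutes)
qed

lemma act_len[simp]: "length (act \<sigma> s) = length s"
  by (simp add: act_def del: upt_Suc)

lemma act_nth: "i < length s \<Longrightarrow> act \<sigma> s ! i = s ! (inv \<sigma> (Suc i) - 1)"
  by (simp add: act_def nth_map_upt del: upt_Suc)

lemma act_char:
  assumes p: "\<sigma> permutes {1..n}" and ls: "length s = n" and lw: "length w = n"
  shows "act \<sigma> s = w \<longleftrightarrow> (\<forall>j\<in>{1..n}. w ! (\<sigma> j - 1) = s ! (j - 1))"
proof
  assume h: "act \<sigma> s = w"
  show "\<forall>j\<in>{1..n}. w ! (\<sigma> j - 1) = s ! (j - 1)"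
  proof
    fix j assume j: "j \<in> {1..n}"
    then have "\<sigma> j \<in> {1..n}" using permutes_in_image[OF p] by blast
    then have "act \<sigma> s ! (\<sigma> j - 1) = s ! (inv \<sigma> (\<sigma> j) - 1)" using act_nth[of "\<sigma> j - 1" s] ls by auto
    then show "w ! (\<sigma> j - 1) = s ! (j - 1)" using h permutes_inverses(2)[OF p] by simp
  qed
next
  assume h: "\<forall>j\<in>{1..n}. w ! (\<sigma> j - 1) = s ! (j - 1)"
  show "act \<sigma> s = w"
  proof (rule nth_equalityI)
    show "length (act \<sigma> s) = length w" using ls lw by simp
    fix k assume "k < length (act \<sigma> s)"
    then have k: "k < n" using ls by simp
    define j where "j = inv \<sigma> (Suc k)"
    have j: "j \<in> {1..n}" unfolding j_def using permutes_in_image[OF permutes_inv[OF p]] k by auto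
    have sj: "\<sigma> j = Suc k" unfolding j_def using permutes_inverses(1)[OF p] by simp
    have "w ! (\<sigma> j - 1) = s ! (j - 1)" using h j by blast
    then have "w ! k = s ! (j - 1)" using sj by simp
    then show "act \<sigma> s ! k = w ! k" using act_nth[of k s \<sigma>] k ls j_def by simp
  qed
qed

lemma Tm_perm: "\<sigma> \<in> Tm m \<Longrightarrow> \<sigma> permutes {1..m}"
  by (simp add: Tm_def)

lemma Tm_max:
  assumes s: "\<sigma> \<in> Tm m" and m: "2 \<le> m"
  shows "\<sigma> 1 = m \<or> \<sigma> m = m"
proof -
  have p: "\<sigma> permutes {1..m}" using s by (simp add: Tm_def)
  obtain t where t: "t \<in> {1..m}" "\<forall>i. 1 \<le> i \<and> i < t \<longrightarrow> \<sigma> i > \<sigma> (Suc i)" "\<sigma> t = 1"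
      "\<forall>i. t \<le> i \<and> i < m \<longrightarrow> \<sigma> i < \<sigma> (Suc i)"
    using s unfolding Tm_def by blast
  have "m \<in> {1..m}" using m by simp
  then obtain j where j: "j \<in> {1..m}" "\<sigma> j = m"
    using permutes_inverses(1)[OF p] permutes_in_image[OF permutes_inv[OF p]] by metis
  have bound: "\<And>i. i \<in> {1..m} \<Longrightarrow> \<sigma> i \<le> m" using permutes_in_image[OF p] by auto
  show ?thesis
  proof (cases "j = 1 \<or> j = m")
    case True then show ?thesis using j by auto
  next
    case False
    then have j2: "2 \<le> j" "j < m" using j by auto
    show ?thesis
    proof (cases "j \<le> t")
      case True
      show ?thesis
      proof (cases "j = t")
        case True then show ?thesis using j t m by auto
      next
        case False
        then have "1 \<le> j - 1 \<and> j - 1 < t" using True j2 by auto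
        then have "\<sigma> (j - 1) > \<sigma> (Suc (j - 1))" using t(2) by blast
        moreover have "Suc (j - 1) = j" using j2 by auto
        moreover have "j - 1 \<in> {1..m}" using j2 by auto
        then have "\<sigma> (j - 1) \<le> m" using bound by blast
        ultimately show ?thesis using j by auto
      qed
    next
      case False
      then have "\<sigma> j < \<sigma> (Suc j)" using t(4) j2 by auto
      moreover have "\<sigma> (Suc j) \<le> m" using bound j2 by auto
      ultimately show ?thesis using j by auto
    qed
  qed
qed

lemma Tm_up:
  assumes s: "\<sigma> \<in> Tm n" shows "\<sigma> \<in> Tm (Suc n)"
proof -
  have p: "\<sigma> permutes {1..n}" using s by (simp add: Tm_def)
  obtain t where t: "t \<in> {1..n}" "\<forall>i. 1 \<le> i \<and> i < t \<longrightarrow> \<sigma> i > \<sigma> (Suc i)" "\<sigma> t = 1"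
      "\<forall>i. t \<le> i \<and> i < n \<longrightarrow> \<sigma> i < \<sigma> (Suc i)"
    using s unfolding Tm_def by blast
  have p2: "\<sigma> permutes {1..Suc n}" using permutes_subset[OF p] by auto
  have fx: "\<sigma> (Suc n) = Suc n" using p by (simp add: permutes_not_in)
  have "\<sigma> n \<le> n" using permutes_in_image[OF p, of n] t(1) by auto
  then have "\<forall>i. t \<le> i \<and> i < Suc n \<longrightarrow> \<sigma> i < \<sigma> (Suc i)"
    using t(4) fx by (metis le_imp_less_Suc less_Suc_eq)
  then show ?thesis unfolding Tm_def using p2 t by (auto intro!: bexI[of _ t])
qed

lemma Tm_down:
  assumes s: "\<sigma> \<in> Tm (Suc n)" and f: "\<sigma> (Suc n) = Suc n" and n: "1 \<le> n"
  shows "\<sigma> \<in> Tm n"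
proof -
  have p: "\<sigma> permutes {1..Suc n}" using s by (simp add: Tm_def)
  obtain t where t: "t \<in> {1..Suc n}" "\<forall>i. 1 \<le> i \<and> i < t \<longrightarrow> \<sigma> i > \<sigma> (Suc i)" "\<sigma> t = 1"
      "\<forall>i. t \<le> i \<and> i < Suc n \<longrightarrow> \<sigma> i < \<sigma> (Suc i)"
    using s unfolding Tm_def by blast
  have p2: "\<sigma> permutes {1..n}" using permutes_superset[OF p] f by (metis Diff_iff atLeastAtMost_iff le_SucE)
  have "t \<noteq> Suc n" using t f n by auto
  then have "t \<in> {1..n}" using t(1) by auto
  then show ?thesis unfolding Tm_def using p2 t by (auto intro!: bexI[of _ t])
qed

lemma act_snoc:
  assumes p: "\<sigma> permutes {1..n}" and l: "length s0 = n"
  shows "act \<sigma> (s0 @ [c]) = act \<sigma> s0 @ [c]"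
proof -
  have p2: "\<sigma> permutes {1..Suc n}" using permutes_subset[OF p] by auto
  have fx: "\<sigma> (Suc n) = Suc n" using p by (simp add: permutes_not_in)
  have A: "\<forall>j\<in>{1..n}. act \<sigma> s0 ! (\<sigma> j - 1) = s0 ! (j - 1)" using act_char[OF p l, of "act \<sigma> s0"] l by simp
  show ?thesis
  proof (subst act_char[OF p2], goal_cases)
    case 3 show ?case
    proof
      fix j assume j: "j \<in> {1..Suc n}"
      show "(act \<sigma> s0 @ [c]) ! (\<sigma> j - 1) = (s0 @ [c]) ! (j - 1)"
      proof (cases "j = Suc n")
        case True then show ?thesis using fx l by (simp add: nth_append)
      next
        case False
        then have j': "j \<in> {1..n}" using j by auto
        then have "\<sigma> j \<in> {1..n}" using permutes_in_image[OF p] by auto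
        then show ?thesis using A j' l by (auto simp: nth_append)
      qed
    qed
  qed (use l in auto)
qed


definition sh :: "nat \<Rightarrow> (nat \<Rightarrow> nat) \<Rightarrow> nat \<Rightarrow> nat" where
  "sh n \<sigma>0 j = (if j = 1 then Suc n else if 2 \<le> j \<and> j \<le> Suc n then \<sigma>0 (j - 1) else j)"

definition unsh :: "nat \<Rightarrow> (nat \<Rightarrow> nat) \<Rightarrow> nat \<Rightarrow> nat" where
  "unsh n \<sigma> j = (if 1 \<le> j \<and> j \<le> n then \<sigma> (Suc j) else j)"

lemma sh_perm:
  assumes p: "\<sigma>0 permutes {1..n}"
  shows "sh n \<sigma>0 permutes {1..Suc n}"
proof (rule perm_intro)
  have im: "\<And>j. j \<in> {1..n} \<Longrightarrow> \<sigma>0 j \<in> {1..n}" using permutes_in_image[OF p] by auto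
  show "sh n \<sigma>0 ` {1..Suc n} \<subseteq> {1..Suc n}"
  proof
    fix y assume "y \<in> sh n \<sigma>0 ` {1..Suc n}"
    then obtain j where j: "j \<in> {1..Suc n}" "y = sh n \<sigma>0 j" by auto
    show "y \<in> {1..Suc n}"
    proof (cases "j = 1")
      case True then show ?thesis using j by (simp add: sh_def)
    next
      case False
      then have "j - 1 \<in> {1..n}" using j by auto
      then show ?thesis using j False im[of "j-1"] by (auto simp: sh_def)
    qed
  qed
  show "inj_on (sh n \<sigma>0) {1..Suc n}"
  proof (rule inj_onI)
    fix i j assume i: "i \<in> {1..Suc n}" and j: "j \<in> {1..Suc n}" and e: "sh n \<sigma>0 i = sh n \<sigma>0 j"
    show "i = j"
    proof (cases "i = 1"; cases "j = 1")
      assume "i = 1" "j = 1" then show ?thesis by simp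
    next
      assume a: "i = 1" "j \<noteq> 1"
      then have "j - 1 \<in> {1..n}" using j by auto
      then show ?thesis using im[of "j-1"] e a j by (auto simp: sh_def)
    next
      assume a: "i \<noteq> 1" "j = 1"
      then have "i - 1 \<in> {1..n}" using i by auto
      then show ?thesis using im[of "i-1"] e a i by (auto simp: sh_def)
    next
      assume a: "i \<noteq> 1" "j \<noteq> 1"
      then have "\<sigma>0 (i - 1) = \<sigma>0 (j - 1)" using e i j by (auto simp: sh_def)
      then have "i - 1 = j - 1" using permutes_inj[OF p] by (meson injD)
      then show ?thesis using a i j by auto
    qed
  qed
qed (auto simp: sh_def)

lemma sh_Tm:
  assumes s: "\<sigma>0 \<in> Tm n" shows "sh n \<sigma>0 \<in> Tm (Suc n)"
proof -
  have p: "\<sigma>0 permutes {1..n}" using s by (simp add: Tm_def)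
  obtain t where t: "t \<in> {1..n}" "\<forall>i. 1 \<le> i \<and> i < t \<longrightarrow> \<sigma>0 i > \<sigma>0 (Suc i)" "\<sigma>0 t = 1"
      "\<forall>i. t \<le> i \<and> i < n \<longrightarrow> \<sigma>0 i < \<sigma>0 (Suc i)"
    using s unfolding Tm_def by blast
  have b1: "\<sigma>0 1 \<le> n" using permutes_in_image[OF p, of 1] t(1) by auto
  have c1: "\<forall>i. 1 \<le> i \<and> i < Suc t \<longrightarrow> sh n \<sigma>0 i > sh n \<sigma>0 (Suc i)"
  proof (intro allI impI)
    fix i assume i: "1 \<le> i \<and> i < Suc t"
    show "sh n \<sigma>0 i > sh n \<sigma>0 (Suc i)"
    proof (cases "i = 1")
      case True then show ?thesis using t(1) b1 by (auto simp: sh_def)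
    next
      case False
      then have "1 \<le> i - 1 \<and> i - 1 < t" using i by auto
      then have "\<sigma>0 (i - 1) > \<sigma>0 (Suc (i - 1))" using t(2) by blast
      moreover have "Suc (i - 1) = i" using False i by auto
      ultimately show ?thesis using False i t(1) by (auto simp: sh_def)
    qed
  qed
  have c2: "sh n \<sigma>0 (Suc t) = 1" using t(1,3) by (auto simp: sh_def)
  have c3: "\<forall>i. Suc t \<le> i \<and> i < Suc n \<longrightarrow> sh n \<sigma>0 i < sh n \<sigma>0 (Suc i)"
  proof (intro allI impI)
    fix i assume i: "Suc t \<le> i \<and> i < Suc n"
    then have "t \<le> i - 1 \<and> i - 1 < n" by auto
    then have "\<sigma>0 (i - 1) < \<sigma>0 (Suc (i - 1))" using t(4) by blast
    moreover have "Suc (i - 1) = i" using i by auto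
    ultimately show "sh n \<sigma>0 i < sh n \<sigma>0 (Suc i)" using i t(1) by (auto simp: sh_def)
  qed
  show ?thesis unfolding Tm_def using sh_perm[OF p] c1 c2 c3 t(1) by (auto intro!: bexI[of _ "Suc t"])
qed

lemma act_sh:
  assumes p: "\<sigma>0 permutes {1..n}" and l: "length s0 = n"
  shows "act (sh n \<sigma>0) (c # s0) = act \<sigma>0 s0 @ [c]"
proof -
  have A: "\<forall>j\<in>{1..n}. act \<sigma>0 s0 ! (\<sigma>0 j - 1) = s0 ! (j - 1)" using act_char[OF p l, of "act \<sigma>0 s0"] l by simp
  show ?thesis
  proof (subst act_char[OF sh_perm[OF p]], goal_cases)
    case 3 show ?case
    proof
      fix j assume j: "j \<in> {1..Suc n}"
      show "(act \<sigma>0 s0 @ [c]) ! (sh n \<sigma>0 j - 1) = (c # s0) ! (j - 1)"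
      proof (cases "j = 1")
        case True then show ?thesis using l by (simp add: nth_append sh_def)
      next
        case False
        then have j': "j - 1 \<in> {1..n}" using j by auto
        then have "\<sigma>0 (j - 1) \<in> {1..n}" using permutes_in_image[OF p] by auto
        moreover have "(c # s0) ! (j - 1) = s0 ! (j - 1 - 1)" using False j by (cases j) auto
        ultimately show ?thesis using A j' l j False by (auto simp: nth_append sh_def)
      qed
    qed
  qed (use l in auto)
qed

lemma sh_unsh:
  assumes p: "\<sigma> permutes {1..Suc n}" and f: "\<sigma> 1 = Suc n"
  shows "sh n (unsh n \<sigma>) = \<sigma>"
proof
  fix j show "sh n (unsh n \<sigma>) j = \<sigma> j"
    using f permutes_not_in[OF p, of j] by (auto simp: sh_def unsh_def)
qed

lemma unsh_Tm:
  assumes s: "\<sigma> \<in> Tm (Suc n)" and f: "\<sigma> 1 = Suc n" and n: "1 \<le> n"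
  shows "unsh n \<sigma> \<in> Tm n"
proof -
  have p: "\<sigma> permutes {1..Suc n}" using s by (simp add: Tm_def)
  obtain t where t: "t \<in> {1..Suc n}" "\<forall>i. 1 \<le> i \<and> i < t \<longrightarrow> \<sigma> i > \<sigma> (Suc i)" "\<sigma> t = 1"
      "\<forall>i. t \<le> i \<and> i < Suc n \<longrightarrow> \<sigma> i < \<sigma> (Suc i)"
    using s unfolding Tm_def by blast
  have t2: "2 \<le> t" using t f n by (metis Suc_1 atLeastAtMost_iff le_antisym not_less_eq_eq old.nat.inject)
  have im: "\<And>j. j \<in> {1..Suc n} \<Longrightarrow> \<sigma> j \<in> {1..Suc n}" using permutes_in_image[OF p] by auto
  have pu: "unsh n \<sigma> permutes {1..n}"
  proof (rule perm_intro)
    show "unsh n \<sigma> ` {1..n} \<subseteq> {1..n}"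
    proof
      fix y assume "y \<in> unsh n \<sigma> ` {1..n}"
      then obtain j where j: "j \<in> {1..n}" "y = \<sigma> (Suc j)" by (auto simp: unsh_def)
      have "\<sigma> (Suc j) \<noteq> Suc n"
      proof
        assume "\<sigma> (Suc j) = Suc n"
        then have "\<sigma> (Suc j) = \<sigma> 1" using f by simp
        then have "Suc j = 1" using permutes_inj[OF p] by (meson injD)
        then show False using j(1) by simp
      qed
      then show "y \<in> {1..n}" using im[of "Suc j"] j by auto
    qed
    show "inj_on (unsh n \<sigma>) {1..n}"
      using permutes_inj[OF p] by (auto simp: inj_on_def unsh_def dest: injD)
  qed (auto simp: unsh_def)
  have c1: "\<forall>i. 1 \<le> i \<and> i < t - 1 \<longrightarrow> unsh n \<sigma> i > unsh n \<sigma> (Suc i)"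
    using t(1,2) by (auto simp: unsh_def)
  have c2: "unsh n \<sigma> (t - 1) = 1" using t(1,3) t2 by (auto simp: unsh_def)
  have c3: "\<forall>i. t - 1 \<le> i \<and> i < n \<longrightarrow> unsh n \<sigma> i < unsh n \<sigma> (Suc i)"
    using t(1,4) t2 by (auto simp: unsh_def)
  show ?thesis unfolding Tm_def using pu c1 c2 c3 t(1) t2 by (auto intro!: bexI[of _ "t - 1"])
qed


lemma peel_single: "peel [c] v \<longleftrightarrow> v = [c]"
  using peel_const[of 1 c v] by simp

lemma bridge: "length s = Suc n \<Longrightarrow> (\<exists>\<sigma>\<in>Tm (length s). act \<sigma> s = w) \<longleftrightarrow> peel s (rev w)"
proof (induction n arbitrary: s w)
  case 0
  then obtain c where s: "s = [c]" by (cases s) auto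
  have idT: "id \<in> Tm 1" unfolding Tm_def by (auto simp: permutes_id)
  have "act \<sigma> [c] = [c]" if "\<sigma> \<in> Tm 1" for \<sigma>
  proof -
    have p: "\<sigma> permutes {1..1}" using that Tm_perm by blast
    then have "\<sigma> 1 = 1" using permutes_in_image[OF p, of 1] by auto
    then show ?thesis using act_char[OF p, of "[c]" "[c]"] by simp
  qed
  then have "(\<exists>\<sigma>\<in>Tm 1. act \<sigma> [c] = w) \<longleftrightarrow> w = [c]" using idT by metis
  then show ?case using s peel_single by (metis One_nat_def length_Cons list.size(3) rev_singleton_conv)
next
  case (Suc n)
  have ne: "s \<noteq> []" using Suc.prems by auto
  have lt: "length (tl s) = Suc n" "length (butlast s) = Suc n" using Suc.prems by auto
  have sh_eq: "s = hd s # tl s" and sb_eq: "s = butlast s @ [last s]" using ne by auto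
  show ?case
  proof
    assume "\<exists>\<sigma>\<in>Tm (length s). act \<sigma> s = w"
    then obtain \<sigma> where sT: "\<sigma> \<in> Tm (Suc (Suc n))" and w: "act \<sigma> s = w" using Suc.prems by auto
    have "\<sigma> 1 = Suc (Suc n) \<or> \<sigma> (Suc (Suc n)) = Suc (Suc n)" using Tm_max[OF sT] by simp
    then show "peel s (rev w)"
    proof
      assume f: "\<sigma> 1 = Suc (Suc n)"
      have p: "\<sigma> permutes {1..Suc (Suc n)}" using sT Tm_perm by blast
      define \<sigma>0 where "\<sigma>0 = unsh (Suc n) \<sigma>"
      have T0: "\<sigma>0 \<in> Tm (Suc n)" unfolding \<sigma>0_def using unsh_Tm[OF sT f] by simp
      have "\<sigma> = sh (Suc n) \<sigma>0" unfolding \<sigma>0_def using sh_unsh[OF p f] by simp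
      then have "w = act \<sigma>0 (tl s) @ [hd s]" using w act_sh[OF Tm_perm[OF T0] lt(1), of "hd s"] sh_eq by metis
      moreover have "peel (tl s) (rev (act \<sigma>0 (tl s)))" using Suc.IH[OF lt(1)] T0 lt(1) by auto
      ultimately show ?thesis using pl sh_eq by (metis rev_append rev_singleton_conv append_Cons append_Nil)
    next
      assume f: "\<sigma> (Suc (Suc n)) = Suc (Suc n)"
      have T0: "\<sigma> \<in> Tm (Suc n)" using Tm_down[OF sT f] by simp
      have "w = act \<sigma> (butlast s) @ [last s]" using w act_snoc[OF Tm_perm[OF T0] lt(2), of "last s"] sb_eq by metis
      moreover have "peel (butlast s) (rev (act \<sigma> (butlast s)))" using Suc.IH[OF lt(2)] T0 lt(2) by auto
      ultimately show ?thesis using pr sb_eq by (metis rev_append rev_singleton_conv append_Cons append_Nil)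
    qed
  next
    assume h: "peel s (rev w)"
    have "length (rev w) = Suc (Suc n)" using peel_len[OF h] Suc.prems by simp
    then obtain c w0 where rw: "rev w = c # w0" by (cases "rev w") auto
    then have wq: "w = rev w0 @ [c]" by (metis rev_rev_ident rev.simps(2))
    have "(hd s = c \<and> peel (tl s) w0) \<or> (last s = c \<and> peel (butlast s) w0)" using h rw peel_Cons by metis
    then show "\<exists>\<sigma>\<in>Tm (length s). act \<sigma> s = w"
    proof
      assume a: "hd s = c \<and> peel (tl s) w0"
      then obtain \<sigma>0 where T0: "\<sigma>0 \<in> Tm (Suc n)" "act \<sigma>0 (tl s) = rev w0"
        using Suc.IH[OF lt(1), of "rev w0"] lt(1) by auto
      have "act (sh (Suc n) \<sigma>0) s = w" using act_sh[OF Tm_perm[OF T0(1)] lt(1), of c] a T0(2) wq sh_eq by metis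
      then show ?thesis using sh_Tm[OF T0(1)] Suc.prems by auto
    next
      assume a: "last s = c \<and> peel (butlast s) w0"
      then obtain \<sigma>0 where T0: "\<sigma>0 \<in> Tm (Suc n)" "act \<sigma>0 (butlast s) = rev w0"
        using Suc.IH[OF lt(2), of "rev w0"] lt(2) by auto
      have "act \<sigma>0 s = w" using act_snoc[OF Tm_perm[OF T0(1)] lt(2), of c] a T0(2) wq sb_eq by metis
      then show ?thesis using Tm_up[OF T0(1)] Suc.prems by auto
    qed
  qed
qed

lemma revseq_rev: "revseq s = rev s"
proof -
  define n where "n = length s"
  have p: "tau n permutes {1..n}"
  proof (rule perm_intro)
    show "tau n ` {1..n} \<subseteq> {1..n}" by (auto simp: tau_def)
    show "inj_on (tau n) {1..n}" by (auto simp: inj_on_def tau_def)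
  qed (auto simp: tau_def)
  have "\<forall>j\<in>{1..n}. rev s ! (tau n j - 1) = s ! (j - 1)"
  proof
    fix j assume j: "j \<in> {1..n}"
    then have "tau n j - 1 = n - j" by (simp add: tau_def)
    moreover have "length s - Suc (n - j) = j - 1" using j n_def by auto
    moreover have "n - j < length s" using j n_def by auto
    ultimately show "rev s ! (tau n j - 1) = s ! (j - 1)" by (simp add: rev_nth)
  qed
  then have "act (tau n) s = rev s"
    using act_char[OF p, of s "rev s"] n_def by simp
  then show ?thesis unfolding revseq_def n_def by simp
qed

theorem mainTheorem9:
  fixes s s' :: "'a list" and m :: nat
  assumes "m \<ge> 1" and "length s = m" and "length s' = m"
  shows "mirrored s s' \<longleftrightarrow> s = s' \<or> s = revseq s'"
proof -
  obtain n where n: "m = Suc n" using assms(1) by (cases m) auto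
  have B: "(\<exists>\<sigma>\<in>Tm m. act \<sigma> s = w) \<longleftrightarrow> peel s (rev w)" for w using bridge[of s n w] assms n by simp
  have B': "(\<exists>\<sigma>\<in>Tm m. act \<sigma> s' = w) \<longleftrightarrow> peel s' (rev w)" for w using bridge[of s' n w] assms n by simp
  have "mirrored s s' \<longleftrightarrow> (\<forall>w. peel s w \<longleftrightarrow> peel s' w)"
  proof
    assume h: "mirrored s s'"
    show "\<forall>w. peel s w \<longleftrightarrow> peel s' w"
    proof (intro allI iffI)
      fix w assume "peel s w"
      then obtain \<sigma> where "\<sigma> \<in> Tm m" "act \<sigma> s = rev w" using B[of "rev w"] by auto
      then obtain \<sigma>' where "\<sigma>' \<in> Tm m" "act \<sigma>' s' = rev w" using h assms unfolding mirrored_def by metis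
      then show "peel s' w" using B'[of "rev w"] by auto
    next
      fix w assume "peel s' w"
      then obtain \<sigma> where "\<sigma> \<in> Tm m" "act \<sigma> s' = rev w" using B'[of "rev w"] by auto
      then obtain \<sigma>' where "\<sigma>' \<in> Tm m" "act \<sigma>' s = rev w" using h assms unfolding mirrored_def by metis
      then show "peel s w" using B[of "rev w"] by auto
    qed
  next
    assume h: "\<forall>w. peel s w \<longleftrightarrow> peel s' w"
    have "\<forall>\<sigma>\<in>Tm m. \<exists>\<sigma>'\<in>Tm m. act \<sigma> s = act \<sigma>' s'"
    proof
      fix \<sigma> assume "\<sigma> \<in> Tm m"
      then have "peel s (rev (act \<sigma> s))" using B by blast
      then have "peel s' (rev (act \<sigma> s))" using h by blast
      then show "\<exists>\<sigma>'\<in>Tm m. act \<sigma> s = act \<sigma>' s'" using B' by metis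
    qed
    moreover have "\<forall>\<tau>'\<in>Tm m. \<exists>\<tau>\<in>Tm m. act \<tau>' s' = act \<tau> s"
    proof
      fix \<sigma> assume "\<sigma> \<in> Tm m"
      then have "peel s' (rev (act \<sigma> s'))" using B' by blast
      then have "peel s (rev (act \<sigma> s'))" using h by blast
      then show "\<exists>\<tau>\<in>Tm m. act \<sigma> s' = act \<tau> s" using B by metis
    qed
    ultimately show "mirrored s s'" unfolding mirrored_def using assms by simp
  qed
  also have "\<dots> \<longleftrightarrow> s' = s \<or> s' = rev s"
  proof
    assume "\<forall>w. peel s w \<longleftrightarrow> peel s' w" then show "s' = s \<or> s' = rev s" using core by blast
  next
    assume "s' = s \<or> s' = rev s" then show "\<forall>w. peel s w \<longleftrightarrow> peel s' w" using peel_rev_iff by auto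
  qed
  also have "\<dots> \<longleftrightarrow> s = s' \<or> s = revseq s'" by (auto simp: revseq_rev)
  finally show ?thesis .
qed

end
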